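(* Let $\psi:S_X\to\mathbb{R}$ be bounded and measurable, $\sigma_X=(\sigma_X^0,\sigma_X[\cdot,\cdot])$ a memory-one strategy for $X$, and $\sigma_Y$ any behavioral strategy for $Y$, generating the measures $\nu_t$. Then $$\sum_{t=0}^\infty\lambda^t\int_{S_X\times S_Y}\Big[\psi(x)-\lambda\int_{S_X}\psi(s)\,d\sigma_X[x,y](s)\Big]\,d\nu_t(x,y)=\int_{S_X}\psi(s)\,d\sigma_X^0(s).$$
   Context: Standing framework. Let $S_X,S_Y$ be measurable spaces, and $\lambda\in(0,1)$. For $T\ge 0$ let $\mathcal{H}^T=(S_X\times S_Y)^T$ ($\mathcal{H}^0=\{\varnothing\}$) and $\mathcal{H}=\bigsqcup_{T\ge0}\mathcal{H}^T$. A behavioral strategy for $X$ (resp. $Y$) is a Markov kernel from $\mathcal{H}$ to $S_X$ (resp. $S_Y$). A memory-one strategy for $X$ is a behavioral strategy determined by a probability measure $\sigma_X^0$ on $S_X$ (used at the empty history) and a Markov kernel $(x,y)\mapsto\sigma_X[x,y]$ from $S_X\times S_Y$ to $S_X$, with $\sigma_X[h^T]=\sigma_X[x_{T-1},y_{T-1}]$ for $h^T=((x_0,y_0),\dots,(x_{T-1},y_{T-1}))$, $T\ge1$. Given behavioral strategies $\sigma_X,\sigma_Y$, put $\sigma(h)=\sigma_X[h]\otimes\sigma_Y[h]$ and define probability measures $\mu_t$ on $\mathcal{H}^{t+1}$ by $\mu_0=\sigma(\varnothing)$ and $\mu_t(E'\times E)=\int_{E'}\sigma(h)(E)\,d\mu_{t-1}(h)$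 (uniquely extended). Let $\nu_t(E)=\mu_t(\mathcal{H}^t\times E)$ be the distribution of the action pair at time $t$. *)

theory Defs
  imports "HOL-Probability.Probability"
begin

text \<open>Histories of length T: H^T = (S_X \<times> S_Y)^T, represented as functions
  on {..<T} (extensional, undefined outside).\<close>
definition hist :: "'x measure \<Rightarrow> 'y measure \<Rightarrow> nat \<Rightarrow> (nat \<Rightarrow> 'x \<times> 'y) measure" where
  "hist MX MY T = PiM {..<T} (\<lambda>_. MX \<Otimes>\<^sub>M MY)"

text \<open>A behavioral strategy (Markov kernel from the disjoint union H of all H^T to S)
  is given as a family of Markov kernels, one for each history length T.\<close>
definition behavioral :: "'x measure \<Rightarrow> 'y measure \<Rightarrow> 'a measure
    \<Rightarrow> (nat \<Rightarrow> (nat \<Rightarrow> 'x \<times> 'y) \<Rightarrow> 'a measure) \<Rightarrow> bool" where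
  "behavioral MX MY M s \<longleftrightarrow> (\<forall>T. s T \<in> hist MX MY T \<rightarrow>\<^sub>M prob_algebra M)"

definition memory_one :: "'x measure \<Rightarrow> ('x \<Rightarrow> 'y \<Rightarrow> 'x measure)
    \<Rightarrow> nat \<Rightarrow> (nat \<Rightarrow> 'x \<times> 'y) \<Rightarrow> 'x measure" where
  "memory_one s0 s1 T h = (case T of 0 \<Rightarrow> s0 | Suc T' \<Rightarrow> s1 (fst (h T')) (snd (h T')))"

definition joint :: "(nat \<Rightarrow> (nat \<Rightarrow> 'x \<times> 'y) \<Rightarrow> 'x measure)
    \<Rightarrow> (nat \<Rightarrow> (nat \<Rightarrow> 'x \<times> 'y) \<Rightarrow> 'y measure) \<Rightarrow> nat \<Rightarrow> (nat \<Rightarrow> 'x \<times> 'y) \<Rightarrow> ('x \<times> 'y) measure" where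
  "joint sX sY T h = sX T h \<Otimes>\<^sub>M sY T h"

text \<open>histm n is the law of the history of length n; hence mu_t = histm (Suc t).
  histm 0 is the Dirac measure at the empty history, and
  histm (Suc t) (E' \<times> E) = \<integral>_{E'} sigma(h)(E) d histm t.\<close>
primrec histm :: "'x measure \<Rightarrow> 'y measure \<Rightarrow> (nat \<Rightarrow> (nat \<Rightarrow> 'x \<times> 'y) \<Rightarrow> 'x measure)
    \<Rightarrow> (nat \<Rightarrow> (nat \<Rightarrow> 'x \<times> 'y) \<Rightarrow> 'y measure) \<Rightarrow> nat \<Rightarrow> (nat \<Rightarrow> 'x \<times> 'y) measure" where
  "histm MX MY sX sY 0 = return (hist MX MY 0) (\<lambda>_. undefined)"
| "histm MX MY sX sY (Suc t) =
     histm MX MY sX sY t \<bind>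
       (\<lambda>h. distr (joint sX sY t h) (hist MX MY (Suc t)) (\<lambda>a. h(t := a)))"

definition mu where "mu MX MY sX sY t = histm MX MY sX sY (Suc t)"

definition nu :: "'x measure \<Rightarrow> 'y measure \<Rightarrow> (nat \<Rightarrow> (nat \<Rightarrow> 'x \<times> 'y) \<Rightarrow> 'x measure)
    \<Rightarrow> (nat \<Rightarrow> (nat \<Rightarrow> 'x \<times> 'y) \<Rightarrow> 'y measure) \<Rightarrow> nat \<Rightarrow> ('x \<times> 'y) measure" where
  "nu MX MY sX sY t = distr (mu MX MY sX sY t) (MX \<Otimes>\<^sub>M MY) (\<lambda>h. h t)"

end

theory Submission
  imports Defs
begin

lemma hist_Suc: "hist MX MY (Suc t) = PiM (insert t {..<t}) (\<lambda>_. MX \<Otimes>\<^sub>M MY)"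
  by (simp add: hist_def lessThan_Suc)

lemma kernel_meas:
  assumes "sX t \<in> hist MX MY t \<rightarrow>\<^sub>M prob_algebra MX" "sY t \<in> hist MX MY t \<rightarrow>\<^sub>M prob_algebra MY"
  shows "(\<lambda>h. distr (joint sX sY t h) (hist MX MY (Suc t)) (\<lambda>a. h(t := a)))
     \<in> hist MX MY t \<rightarrow>\<^sub>M prob_algebra (hist MX MY (Suc t))"
  unfolding joint_def
  apply (rule measurable_distr_prob_space2[where M="MX \<Otimes>\<^sub>M MY"])
   apply (rule measurable_pair_prob; fact)
  using measurable_add_dim[of t "{..<t}" "\<lambda>_. MX\<Otimes>\<^sub>M MY"] by (simp add: hist_def lessThan_Suc)

lemma histm_space:
  assumes "\<And>t. sX t \<in> hist MX MY t \<rightarrow>\<^sub>M prob_algebra MX" "\<And>t. sY t \<in> hist MX MY t \<rightarrow>\<^sub>M prob_algebra MY"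
  shows "histm MX MY sX sY t \<in> space (prob_algebra (hist MX MY t))"
proof (induction t)
  case 0
  show ?case
    by (simp add: hist_def measurable_space[OF measurable_return_prob_space])
next
  case (Suc t)
  from kernel_meas[OF assms] have K: "(\<lambda>h. distr (joint sX sY t h) (hist MX MY (Suc t)) (\<lambda>a. h(t := a)))
     \<in> hist MX MY t \<rightarrow>\<^sub>M prob_algebra (hist MX MY (Suc t))" .
  show ?case
    using prob_space_bind'[OF Suc K] sets_bind'[OF Suc K] by (simp add: space_prob_algebra)
qed

lemma integral_step:
  assumes sXm: "\<And>t. sX t \<in> hist MX MY t \<rightarrow>\<^sub>M prob_algebra MX"
    and sYm: "\<And>t. sY t \<in> hist MX MY t \<rightarrow>\<^sub>M prob_algebra MY"
    and F: "F \<in> borel_measurable (MX \<Otimes>\<^sub>M MY)"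
    and Fb: "\<And>z. z \<in> space (MX \<Otimes>\<^sub>M MY) \<Longrightarrow> \<bar>F z\<bar> \<le> (B::real)"
  shows "(\<integral>h. F (h t) \<partial>histm MX MY sX sY (Suc t))
       = (\<integral>h. (\<integral>a. F a \<partial>joint sX sY t h) \<partial>histm MX MY sX sY t)"
proof -
  have K: "(\<lambda>h. distr (joint sX sY t h) (hist MX MY (Suc t)) (\<lambda>a. h(t := a)))
     \<in> hist MX MY t \<rightarrow>\<^sub>M prob_algebra (hist MX MY (Suc t))"
    by (rule kernel_meas[OF sXm sYm])
  have Hs: "histm MX MY sX sY t \<in> space (prob_algebra (hist MX MY t))"
    by (rule histm_space[OF sXm sYm])
  then have ps: "prob_space (histm MX MY sX sY t)" and Hsets: "sets (histm MX MY sX sY t) = sets (hist MX MY t)"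
    by (auto simp: space_prob_algebra)
  have fin: "finite_measure (histm MX MY sX sY t)" using ps by (simp add: prob_space_def)
  have K': "(\<lambda>h. distr (joint sX sY t h) (hist MX MY (Suc t)) (\<lambda>a. h(t := a)))
     \<in> histm MX MY sX sY t \<rightarrow>\<^sub>M subprob_algebra (hist MX MY (Suc t))"
    using measurable_prob_algebraD[OF K] by (simp add: measurable_cong_sets[OF Hsets refl])
  have comp: "(\<lambda>h. h t) \<in> hist MX MY (Suc t) \<rightarrow>\<^sub>M MX \<Otimes>\<^sub>M MY"
    unfolding hist_def by (rule measurable_component_singleton) simp
  have Fm: "(\<lambda>h. F (h t)) \<in> borel_measurable (hist MX MY (Suc t))"
    by (rule measurable_compose[OF comp F])
  have Fbd: "\<bar>F (h t)\<bar> \<le> B" if "h \<in> space (hist MX MY (Suc t))" for h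
    using Fb measurable_space[OF comp that] by blast
  have AE: "AE h in histm MX MY sX sY t.
     emeasure (distr (joint sX sY t h) (hist MX MY (Suc t)) (\<lambda>a. h(t := a)))
        (space (distr (joint sX sY t h) (hist MX MY (Suc t)) (\<lambda>a. h(t := a)))) \<le> ennreal 1"
  proof (rule AE_I2)
    fix h assume "h \<in> space (histm MX MY sX sY t)"
    then have "h \<in> space (hist MX MY t)" using sets_eq_imp_space_eq[OF Hsets] by simp
    from measurable_space[OF K this] show "emeasure (distr (joint sX sY t h) (hist MX MY (Suc t)) (\<lambda>a. h(t := a)))
        (space (distr (joint sX sY t h) (hist MX MY (Suc t)) (\<lambda>a. h(t := a)))) \<le> ennreal 1"
      by (auto simp: space_prob_algebra intro: prob_space.emeasure_le_1)
  qed
  have "(\<integral>h. F (h t) \<partial>histm MX MY sX sY (Suc t))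
      = (\<integral>h. (\<integral>h'. F (h' t) \<partial>distr (joint sX sY t h) (hist MX MY (Suc t)) (\<lambda>a. h(t := a))) \<partial>histm MX MY sX sY t)"
    unfolding histm.simps
    by (rule integral_bind[where B=B and B'=1 and K="hist MX MY (Suc t)"]) (rule Fm, erule Fbd, rule K', rule fin, rule AE)
  also have "\<dots> = (\<integral>h. (\<integral>a. F a \<partial>joint sX sY t h) \<partial>histm MX MY sX sY t)"
  proof (rule Bochner_Integration.integral_cong[OF refl])
    fix h assume "h \<in> space (histm MX MY sX sY t)"
    then have h: "h \<in> space (hist MX MY t)" using sets_eq_imp_space_eq[OF Hsets] by simp
    have s1: "sets (sX t h) = sets MX" using measurable_space[OF sXm h] by (simp add: space_prob_algebra)
    have s2: "sets (sY t h) = sets MY" using measurable_space[OF sYm h] by (simp add: space_prob_algebra)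
    have sj: "sets (joint sX sY t h) = sets (MX \<Otimes>\<^sub>M MY)"
      unfolding joint_def by (rule sets_pair_measure_cong[OF s1 s2])
    have upd: "(\<lambda>a. h(t := a)) \<in> joint sX sY t h \<rightarrow>\<^sub>M hist MX MY (Suc t)"
      unfolding hist_Suc measurable_cong_sets[OF sj refl]
      using measurable_component_update[of h "{..<t}" "\<lambda>_. MX \<Otimes>\<^sub>M MY" t] h by (simp add: hist_def)
    show "(\<integral>h'. F (h' t) \<partial>distr (joint sX sY t h) (hist MX MY (Suc t)) (\<lambda>a. h(t := a)))
        = (\<integral>a. F a \<partial>joint sX sY t h)"
      by (simp add: integral_distr[OF upd Fm])
  qed
  finally show ?thesis .
qed

lemma bnd_integrable:
  fixes f :: "'a \<Rightarrow> real"
  assumes "prob_space M" "f \<in> borel_measurable M" "\<And>x. x \<in> space M \<Longrightarrow> \<bar>f x\<bar> \<le> B"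
  shows "integrable M f"
proof -
  interpret prob_space M by fact
  show ?thesis using assms(2,3) by (intro integrable_const_bound[where B=B]) auto
qed

lemma bnd_integral:
  fixes f :: "'a \<Rightarrow> real"
  assumes "prob_space M" "f \<in> borel_measurable M" "\<And>x. x \<in> space M \<Longrightarrow> \<bar>f x\<bar> \<le> B"
  shows "\<bar>integral\<^sup>L M f\<bar> \<le> B"
proof -
  interpret prob_space M by fact
  have "integrable M (\<lambda>x. \<bar>f x\<bar>)" using bnd_integrable[OF assms] by simp
  then have "(\<integral>x. \<bar>f x\<bar> \<partial>M) \<le> B" using assms(3) by (intro integral_le_const) (auto intro!: AE_I2)
  then show ?thesis using integral_abs_bound[of M f] by linarith
qed

lemma integral_fst_pair:
  fixes psi :: "'a \<Rightarrow> real"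
  assumes "prob_space N" "psi \<in> borel_measurable M"
  shows "(\<integral>a. psi (fst a) \<partial>(M \<Otimes>\<^sub>M N)) = (\<integral>s. psi s \<partial>M)"
proof -
  interpret prob_space N by fact
  have "(\<integral>s. psi s \<partial>M) = (\<integral>s. psi s \<partial>distr (M \<Otimes>\<^sub>M N) M fst)" by (simp add: distr_pair_fst)
  also have "\<dots> = (\<integral>a. psi (fst a) \<partial>(M \<Otimes>\<^sub>M N))"
    by (rule integral_distr[OF measurable_fst assms(2)])
  finally show ?thesis by simp
qed

theorem proposition1:
  fixes MX :: "'x measure" and MY :: "'y measure" and lam :: real
    and psi :: "'x \<Rightarrow> real"
    and sX0 :: "'x measure" and sX1 :: "'x \<Rightarrow> 'y \<Rightarrow> 'x measure"
    and sY :: "nat \<Rightarrow> (nat \<Rightarrow> 'x \<times> 'y) \<Rightarrow> 'y measure"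
  assumes "0 < lam" and "lam < 1"
    and psim: "psi \<in> borel_measurable MX"
    and "\<exists>B. \<forall>x\<in>space MX. \<bar>psi x\<bar> \<le> B"
    and S0: "sX0 \<in> space (prob_algebra MX)"
    and S1: "(\<lambda>(x, y). sX1 x y) \<in> MX \<Otimes>\<^sub>M MY \<rightarrow>\<^sub>M prob_algebra MX"
    and "behavioral MX MY MY sY"
  shows "(\<lambda>t. lam ^ t * (\<integral>(x, y). (psi x - lam * (\<integral>s. psi s \<partial>sX1 x y))
            \<partial>nu MX MY (memory_one sX0 sX1) sY t))
         sums (\<integral>s. psi s \<partial>sX0)"
proof -
  obtain B where B: "\<And>x. x \<in> space MX \<Longrightarrow> \<bar>psi x\<bar> \<le> B" using assms(4) by blast
  define sX where "sX = memory_one sX0 sX1"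
  have comp: "(\<lambda>h. h t) \<in> hist MX MY (Suc t) \<rightarrow>\<^sub>M MX \<Otimes>\<^sub>M MY" for t
    unfolding hist_def by (rule measurable_component_singleton) simp
  have sXm: "sX t \<in> hist MX MY t \<rightarrow>\<^sub>M prob_algebra MX" for t
  proof (cases t)
    case 0
    have "sX t = (\<lambda>h. sX0)" by (rule ext) (simp add: sX_def memory_one_def 0)
    then show ?thesis using S0 by simp
  next
    case (Suc t')
    have "sX t = (\<lambda>h. (\<lambda>(x, y). sX1 x y) (h t'))"
      by (rule ext) (simp add: sX_def memory_one_def Suc case_prod_beta)
    then show ?thesis using measurable_compose[OF comp S1] Suc by simp
  qed
  have sYm: "sY t \<in> hist MX MY t \<rightarrow>\<^sub>M prob_algebra MY" for t
    using assms(7) by (simp add: behavioral_def)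
  define g where "g = (\<lambda>z. \<integral>s. psi s \<partial>((\<lambda>(x, y). sX1 x y) z))"
  have gm: "g \<in> borel_measurable (MX \<Otimes>\<^sub>M MY)"
    unfolding g_def
    by (rule measurable_compose[OF measurable_prob_algebraD[OF S1] integral_measurable_subprob_algebra[OF psim]])
  have gb: "\<bar>g z\<bar> \<le> B" if "z \<in> space (MX \<Otimes>\<^sub>M MY)" for z
  proof -
    have "(\<lambda>(x, y). sX1 x y) z \<in> space (prob_algebra MX)" using measurable_space[OF S1 that] .
    then have p: "prob_space ((\<lambda>(x, y). sX1 x y) z)" and s: "sets ((\<lambda>(x, y). sX1 x y) z) = sets MX"
      by (auto simp: space_prob_algebra)
    show ?thesis unfolding g_def
      by (rule bnd_integral[OF p]) (use psim B sets_eq_imp_space_eq[OF s] s in \<open>auto cong: measurable_cong_sets\<close>)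
  qed
  have pf: "(\<lambda>z. psi (fst z)) \<in> borel_measurable (MX \<Otimes>\<^sub>M MY)" using psim by measurable
  have pfb: "\<bar>psi (fst z)\<bar> \<le> B" if "z \<in> space (MX \<Otimes>\<^sub>M MY)" for z
    using B that by (auto simp: space_pair_measure)
  have Hs: "histm MX MY sX sY t \<in> space (prob_algebra (hist MX MY t))" for t
    by (rule histm_space[OF sXm sYm])
  have Hp: "prob_space (histm MX MY sX sY t)" and Hsets: "sets (histm MX MY sX sY t) = sets (hist MX MY t)" for t
    using Hs[of t] by (auto simp: space_prob_algebra)
  have comp': "(\<lambda>h. h t) \<in> histm MX MY sX sY (Suc t) \<rightarrow>\<^sub>M MX \<Otimes>\<^sub>M MY" for t
    by (subst measurable_cong_sets[OF Hsets refl]) (rule comp)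
  have nu_int: "(\<integral>z. F z \<partial>nu MX MY sX sY t) = (\<integral>h. F (h t) \<partial>histm MX MY sX sY (Suc t))"
    if "F \<in> borel_measurable (MX \<Otimes>\<^sub>M MY)" for F :: "'x \<times> 'y \<Rightarrow> real" and t
    unfolding nu_def mu_def by (rule integral_distr[OF comp' that])
  have nu_p: "prob_space (nu MX MY sX sY t)" for t
    unfolding nu_def mu_def by (rule prob_space.prob_space_distr[OF Hp comp'])
  have nu_s: "sets (nu MX MY sX sY t) = sets (MX \<Otimes>\<^sub>M MY)" for t
    unfolding nu_def by simp
  define A where "A t = (\<integral>z. psi (fst z) \<partial>nu MX MY sX sY t)" for t
  have A_step: "A s = (\<integral>h. (\<integral>x. psi x \<partial>sX s h) \<partial>histm MX MY sX sY s)" for s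
  proof -
    have "A s = (\<integral>h. psi (fst (h s)) \<partial>histm MX MY sX sY (Suc s))"
      unfolding A_def by (rule nu_int[OF pf])
    also have "\<dots> = (\<integral>h. (\<integral>a. psi (fst a) \<partial>joint sX sY s h) \<partial>histm MX MY sX sY s)"
      by (rule integral_step[OF sXm sYm pf pfb])
    also have "\<dots> = (\<integral>h. (\<integral>x. psi x \<partial>sX s h) \<partial>histm MX MY sX sY s)"
    proof (rule Bochner_Integration.integral_cong[OF refl])
      fix h assume "h \<in> space (histm MX MY sX sY s)"
      then have h: "h \<in> space (hist MX MY s)" using sets_eq_imp_space_eq[OF Hsets] by simp
      have s1: "sets (sX s h) = sets MX" using measurable_space[OF sXm h] by (simp add: space_prob_algebra)
      have p2: "prob_space (sY s h)" using measurable_space[OF sYm h] by (simp add: space_prob_algebra)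
      show "(\<integral>a. psi (fst a) \<partial>joint sX sY s h) = (\<integral>x. psi x \<partial>sX s h)"
        unfolding joint_def
        by (rule integral_fst_pair[OF p2]) (use psim s1 in \<open>simp cong: measurable_cong_sets\<close>)
    qed
    finally show ?thesis .
  qed
  have A0: "A 0 = (\<integral>s. psi s \<partial>sX0)"
    unfolding A_step by (simp add: sX_def memory_one_def hist_def measure_return space_PiM_empty sets_PiM_empty)
  have AS: "A (Suc t) = (\<integral>z. g z \<partial>nu MX MY sX sY t)" for t
  proof -
    have "A (Suc t) = (\<integral>h. g (h t) \<partial>histm MX MY sX sY (Suc t))"
      unfolding A_step by (simp add: sX_def memory_one_def g_def case_prod_beta)
    also have "\<dots> = (\<integral>z. g z \<partial>nu MX MY sX sY t)" by (rule nu_int[OF gm, symmetric])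
    finally show ?thesis .
  qed
  have Ab: "\<bar>A t\<bar> \<le> B" for t
    unfolding A_def
    by (rule bnd_integral[OF nu_p]) (use pf pfb sets_eq_imp_space_eq[OF nu_s] nu_s in \<open>auto cong: measurable_cong_sets\<close>)
  have termeq: "lam ^ t * (\<integral>(x, y). (psi x - lam * (\<integral>s. psi s \<partial>sX1 x y)) \<partial>nu MX MY sX sY t)
      = lam ^ t * A t - lam ^ Suc t * A (Suc t)" for t
  proof -
    have i1: "integrable (nu MX MY sX sY t) (\<lambda>z. psi (fst z))"
      by (rule bnd_integrable[OF nu_p]) (use pf pfb sets_eq_imp_space_eq[OF nu_s] nu_s in \<open>auto cong: measurable_cong_sets\<close>)
    have i2: "integrable (nu MX MY sX sY t) g"
      by (rule bnd_integrable[OF nu_p]) (use gm gb sets_eq_imp_space_eq[OF nu_s] nu_s in \<open>auto cong: measurable_cong_sets\<close>)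
    have "(\<integral>(x, y). (psi x - lam * (\<integral>s. psi s \<partial>sX1 x y)) \<partial>nu MX MY sX sY t)
        = (\<integral>z. psi (fst z) - lam * g z \<partial>nu MX MY sX sY t)"
      by (simp add: g_def split_beta')
    also have "\<dots> = A t - lam * A (Suc t)"
      using i1 i2 by (subst AS) (simp add: A_def)
    finally show ?thesis by (simp add: right_diff_distrib)
  qed
  have lim: "(\<lambda>t. lam ^ t * A t) \<longlonglongrightarrow> 0"
  proof (rule Lim_null_comparison)
    show "\<forall>\<^sub>F t in sequentially. norm (lam ^ t * A t) \<le> lam ^ t * B"
      using Ab assms(1) by (auto simp: abs_mult intro!: mult_left_mono)
    show "(\<lambda>t. lam ^ t * B) \<longlonglongrightarrow> 0"
      using assms(1,2) by (intro tendsto_mult_left_zero LIMSEQ_power_zero) auto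
  qed
  have "(\<lambda>t. lam ^ t * A t - lam ^ Suc t * A (Suc t)) sums (lam ^ 0 * A 0 - 0)"
    using telescope_sums'[OF lim] by simp
  then show ?thesis unfolding sX_def[symmetric] termeq by (simp add: A0)
qed

end
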